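(* Fix a BS $j$ and, for each class $l\in\{1,\dots,L\}$, a measurable set $A_l$ of (nonatomic) class-$l$ mobiles associated with BS $j$, of mass $m_{lj}\ge 0$. (1) The power control subproblem of BS $j$ is feasible if and only if $\sum_{l=1}^L m_{lj}\gamma_l<1$. (2) If it is feasible, there exists a unique Pareto efficient power density $p$, given by $p(x)=\frac{\sigma^2}{h_{lj}}\,\frac{\gamma_l}{1-\sum_{l'=1}^L m_{l'j}\gamma_{l'}}$ for all $x\in A_l$, $l=1,\dots,L$.
   Context: Nonatomic uplink model: class-$l$ mobiles all have power gain $h_{lj}>0$ to BS $j$ and common target SINR density $\gamma_l>0$; receiver noise power is $\sigma^2>0$. Masses are measured by Lebesgue measure. A power density is a measurable function $p:\bigcup_l A_l\to(0,\infty)$ (integrable against the gains). The SINR density of $x\in A_l$ is $\frac{h_{lj}p(x)}{\sum_{l'}\int_{A_{l'}}h_{l'j}p(z)\,dz+\sigma^2}$. $p$ is feasible if the SINR density of every $x\in A_l$ is at least $\gamma_l$, for all $l$; the power control subproblem of BS $j$ is feasible if a feasible $p$ exists. A feasible $p$ is Pareto efficient if there is no feasible $q$ with $q\le p$ everywhere and $q<p$ on a set of positive measure. *)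

theory Defs
  imports "HOL-Analysis.Analysis"
begin

text \<open>Classes are 1..L; A l is the
 set of class-l mobiles (points of a Euclidean space, Lebesgue measure); h l = h_{lj} is
 the gain of class l to BS j; gam l = gamma_l; sigma2 = sigma^2.\<close>

definition mobiles :: "nat \<Rightarrow> (nat \<Rightarrow> 'a::euclidean_space set) \<Rightarrow> 'a set" where
  "mobiles L A = (\<Union>l\<in>{1..L}. A l)"

definition power_density :: "nat \<Rightarrow> (nat \<Rightarrow> 'a::euclidean_space set) \<Rightarrow> ('a \<Rightarrow> real) \<Rightarrow> bool" where
  "power_density L A p \<longleftrightarrow>
     (\<forall>l\<in>{1..L}. \<forall>x\<in>A l. 0 < p x) \<and> (\<forall>l\<in>{1..L}. set_integrable lebesgue (A l) p)"

definition interference :: "nat \<Rightarrow> (nat \<Rightarrow> 'a::euclidean_space set) \<Rightarrow> (nat \<Rightarrow> real) \<Rightarrow> ('a \<Rightarrow> real) \<Rightarrow> real" where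
  "interference L A h p = (\<Sum>l'\<in>{1..L}. h l' * (LINT z:A l'|lebesgue. p z))"

definition sinr :: "nat \<Rightarrow> (nat \<Rightarrow> 'a::euclidean_space set) \<Rightarrow> (nat \<Rightarrow> real) \<Rightarrow> real \<Rightarrow> ('a \<Rightarrow> real) \<Rightarrow> nat \<Rightarrow> 'a \<Rightarrow> real" where
  "sinr L A h sigma2 p l x = h l * p x / (interference L A h p + sigma2)"

definition feasible_pd :: "nat \<Rightarrow> (nat \<Rightarrow> 'a::euclidean_space set) \<Rightarrow> (nat \<Rightarrow> real) \<Rightarrow> (nat \<Rightarrow> real) \<Rightarrow> real \<Rightarrow> ('a \<Rightarrow> real) \<Rightarrow> bool" where
  "feasible_pd L A h gam sigma2 p \<longleftrightarrow>
     power_density L A p \<and> (\<forall>l\<in>{1..L}. \<forall>x\<in>A l. sinr L A h sigma2 p l x \<ge> gam l)"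

definition subproblem_feasible :: "nat \<Rightarrow> (nat \<Rightarrow> 'a::euclidean_space set) \<Rightarrow> (nat \<Rightarrow> real) \<Rightarrow> (nat \<Rightarrow> real) \<Rightarrow> real \<Rightarrow> bool" where
  "subproblem_feasible L A h gam sigma2 \<longleftrightarrow> (\<exists>p. feasible_pd L A h gam sigma2 p)"

definition pareto_efficient :: "nat \<Rightarrow> (nat \<Rightarrow> 'a::euclidean_space set) \<Rightarrow> (nat \<Rightarrow> real) \<Rightarrow> (nat \<Rightarrow> real) \<Rightarrow> real \<Rightarrow> ('a \<Rightarrow> real) \<Rightarrow> bool" where
  "pareto_efficient L A h gam sigma2 p \<longleftrightarrow>
     feasible_pd L A h gam sigma2 p \<and>
     \<not> (\<exists>q. feasible_pd L A h gam sigma2 q \<and> (\<forall>x\<in>mobiles L A. q x \<le> p x) \<and>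
            emeasure lebesgue {x\<in>mobiles L A. q x < p x} > 0)"

end

theory Submission
  imports Defs
begin

lemma const_setint:
  assumes "A \<in> sets lebesgue" "emeasure lebesgue A = ennreal m" "0 \<le> m"
  shows "set_integrable lebesgue A (\<lambda>_. c::real) \<and> (LINT x:A|lebesgue. c) = m * c"
proof -
  have "emeasure lebesgue A < \<infinity>" using assms by simp
  hence 1: "set_integrable lebesgue A (\<lambda>_. c)" unfolding set_integrable_def using assms(1) by simp
  have "measure lebesgue A = m" using assms by (simp add: measure_def)
  thus ?thesis using 1 set_integral_const[of A lebesgue c] assms by simp
qed

lemma some_class:
  assumes "disjoint_family_on A {1..L}" "l \<in> {1..L}" "x \<in> A l"
  shows "(SOME l'. l' \<in> {1..(L::nat)} \<and> x \<in> A l') = l"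
proof (rule some_equality)
  show "l \<in> {1..L} \<and> x \<in> A l" using assms by simp
  fix l' assume "l' \<in> {1..L} \<and> x \<in> A l'"
  thus "l' = l" using assms unfolding disjoint_family_on_def by blast
qed

theorem proposition7:
  fixes L :: nat and A :: "nat \<Rightarrow> 'a::euclidean_space set"
    and h gam m :: "nat \<Rightarrow> real" and sigma2 :: real
  assumes A_meas: "\<forall>l\<in>{1..L}. A l \<in> sets lebesgue"
    and A_disj: "disjoint_family_on A {1..L}"
    and mass: "\<forall>l\<in>{1..L}. 0 \<le> m l \<and> emeasure lebesgue (A l) = ennreal (m l)"
    and h_pos: "\<forall>l\<in>{1..L}. 0 < h l"
    and gam_pos: "\<forall>l\<in>{1..L}. 0 < gam l"
    and sigma_pos: "0 < sigma2"
  shows "(subproblem_feasible L A h gam sigma2 \<longleftrightarrow> (\<Sum>l\<in>{1..L}. m l * gam l) < 1)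
    \<and> (subproblem_feasible L A h gam sigma2 \<longrightarrow>
        (let pstar = (\<lambda>x. sigma2 / h (SOME l. l \<in> {1..L} \<and> x \<in> A l)
                         * (gam (SOME l. l \<in> {1..L} \<and> x \<in> A l) / (1 - (\<Sum>l'\<in>{1..L}. m l' * gam l'))))
         in pareto_efficient L A h gam sigma2 pstar
            \<and> (\<forall>p. pareto_efficient L A h gam sigma2 p \<longrightarrow>
                 (AE x in lebesgue. \<forall>l\<in>{1..L}. x \<in> A l \<longrightarrow>
                    p x = sigma2 / h l * (gam l / (1 - (\<Sum>l'\<in>{1..L}. m l' * gam l')))))))"
proof -
  define S where "S = (\<Sum>l\<in>{1..L}. m l * gam l)"
  define c where "c l = sigma2 / h l * (gam l / (1 - S))" for l
  define pstar where "pstar = (\<lambda>x. sigma2 / h (SOME l. l \<in> {1..L} \<and> x \<in> A l)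
                         * (gam (SOME l. l \<in> {1..L} \<and> x \<in> A l) / (1 - S)))"
  have pstar_eq: "pstar x = c l" if "l \<in> {1..L}" "x \<in> A l" for x l
    using some_class[OF A_disj that] unfolding pstar_def c_def S_def by simp
  have Inonneg: "0 \<le> interference L A h q" if "power_density L A q" for q
  proof -
    have "0 \<le> h l * (LINT z:A l|lebesgue. q z)" if l: "l \<in> {1..L}" for l
    proof -
      have ci: "set_integrable lebesgue (A l) (\<lambda>_. 0::real) \<and> (LINT x:A l|lebesgue. (0::real)) = m l * 0"
        using const_setint[of "A l" "m l"] A_meas mass l by blast
      have "(LINT x:A l|lebesgue. (0::real)) \<le> (LINT z:A l|lebesgue. q z)"
        apply (rule set_integral_mono)
        using ci \<open>power_density L A q\<close> l unfolding power_density_def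
        by (auto intro: less_imp_le)
      thus ?thesis using ci h_pos l by (simp add: less_imp_le)
    qed
    thus ?thesis unfolding interference_def by (intro sum_nonneg) blast
  qed
  have lower: "q x \<ge> gam l * (interference L A h q + sigma2) / h l"
    if f: "feasible_pd L A h gam sigma2 q" and l: "l \<in> {1..L}" and x: "x \<in> A l" for q l x
  proof -
    have pos: "0 < interference L A h q + sigma2"
      using Inonneg f sigma_pos unfolding feasible_pd_def by fastforce
    have "gam l \<le> h l * q x / (interference L A h q + sigma2)"
      using f l x unfolding feasible_pd_def sinr_def by blast
    hence "gam l * (interference L A h q + sigma2) \<le> h l * q x"
      using pos by (simp add: pos_le_divide_eq)
    thus ?thesis using h_pos l by (simp add: pos_divide_le_eq mult.commute)
  qed
  have Ibound: "interference L A h q \<ge> S * (interference L A h q + sigma2)"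
    if f: "feasible_pd L A h gam sigma2 q" for q
  proof -
    let ?K = "interference L A h q + sigma2"
    have "m l * gam l * ?K \<le> h l * (LINT z:A l|lebesgue. q z)" if l: "l \<in> {1..L}" for l
    proof -
      have ci: "set_integrable lebesgue (A l) (\<lambda>_. gam l * ?K / h l) \<and>
         (LINT x:A l|lebesgue. gam l * ?K / h l) = m l * (gam l * ?K / h l)"
        using const_setint[of "A l" "m l"] A_meas mass l by blast
      have "(LINT x:A l|lebesgue. gam l * ?K / h l) \<le> (LINT z:A l|lebesgue. q z)"
        apply (rule set_integral_mono)
        using ci f l lower[OF f l] unfolding feasible_pd_def power_density_def
        by auto
      hence a: "m l * (gam l * ?K / h l) \<le> (LINT z:A l|lebesgue. q z)"
        using ci by linarith
      have hp: "0 < h l" using h_pos l by blast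
      have "m l * gam l * ?K = m l * (gam l * ?K / h l) * h l" using hp by simp
      also have "\<dots> \<le> (LINT z:A l|lebesgue. q z) * h l"
        using a hp by (intro mult_right_mono) auto
      finally show ?thesis by (simp add: mult.commute)
    qed
    hence "(\<Sum>l\<in>{1..L}. m l * gam l * ?K) \<le> interference L A h q"
      unfolding interference_def by (rule sum_mono)
    thus ?thesis unfolding S_def by (simp add: sum_distrib_right)
  qed
  have S1: "S < 1" if sf: "subproblem_feasible L A h gam sigma2"
  proof (rule ccontr)
    assume "\<not> S < 1"
    obtain q where f: "feasible_pd L A h gam sigma2 q" using sf unfolding subproblem_feasible_def by blast
    have pos: "0 < interference L A h q + sigma2"
      using Inonneg f sigma_pos unfolding feasible_pd_def by fastforce
    have "interference L A h q + sigma2 \<le> S * (interference L A h q + sigma2)"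
      using \<open>\<not> S < 1\<close> pos by (simp add: mult_le_cancel_right1)
    thus False using Ibound[OF f] sigma_pos by linarith
  qed
  have above: "q x \<ge> c l" if S: "S < 1" and f: "feasible_pd L A h gam sigma2 q"
     and l: "l \<in> {1..L}" and x: "x \<in> A l" for q l x
  proof -
    let ?I = "interference L A h q"
    have "?I * (1 - S) \<ge> S * sigma2" using Ibound[OF f] by (simp add: algebra_simps)
    hence "?I \<ge> S * sigma2 / (1 - S)" using S by (simp add: pos_divide_le_eq)
    hence "?I + sigma2 \<ge> sigma2 / (1 - S)" using S by (simp add: field_simps)
    hence "gam l * (?I + sigma2) / h l \<ge> gam l * (sigma2 / (1 - S)) / h l"
      using gam_pos h_pos l by (intro divide_right_mono mult_left_mono) (auto intro: less_imp_le)
    moreover have "gam l * (sigma2 / (1 - S)) / h l = c l" unfolding c_def by (simp add: mult.commute)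
    ultimately show ?thesis using lower[OF f l x] by linarith
  qed
  have pstar_feas: "feasible_pd L A h gam sigma2 pstar" if S: "S < 1"
  proof -
    have si: "set_integrable lebesgue (A l) pstar \<and> (LINT x:A l|lebesgue. pstar x) = m l * c l"
      if l: "l \<in> {1..L}" for l
    proof -
      have ci: "set_integrable lebesgue (A l) (\<lambda>_. c l) \<and> (LINT x:A l|lebesgue. c l) = m l * c l"
        using const_setint[of "A l" "m l"] A_meas mass l by blast
      have "set_integrable lebesgue (A l) pstar = set_integrable lebesgue (A l) (\<lambda>_. c l)"
        by (rule set_integrable_cong) (use pstar_eq[OF l] in auto)
      moreover have "(LINT x:A l|lebesgue. pstar x) = (LINT x:A l|lebesgue. c l)"
        by (rule set_lebesgue_integral_cong) (use pstar_eq[OF l] A_meas l in auto)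
      ultimately show ?thesis using ci by simp
    qed
    have I: "interference L A h pstar = (\<Sum>l\<in>{1..L}. m l * gam l) * (sigma2 / (1 - S))"
      unfolding interference_def sum_distrib_right
    proof (rule sum.cong)
      fix l assume l: "l \<in> {1..L}"
      show "h l * (LINT z:A l|lebesgue. pstar z) = m l * gam l * (sigma2 / (1 - S))"
      proof -
        have hp: "h l \<noteq> 0" using h_pos l by (metis less_irrefl)
        have "h l * (LINT z:A l|lebesgue. pstar z) = h l * (m l * c l)" using si[OF l] by simp
        also have "\<dots> = m l * gam l * (sigma2 / (1 - S))" unfolding c_def using hp by simp
        finally show ?thesis .
      qed
    qed simp
    have K: "interference L A h pstar + sigma2 = sigma2 / (1 - S)"
      using S unfolding I S_def[symmetric] by (simp add: field_simps)
    have cpos: "0 < c l" if "l \<in> {1..L}" for l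
      using that h_pos gam_pos sigma_pos S unfolding c_def by simp
    show ?thesis unfolding feasible_pd_def power_density_def
    proof (intro conjI ballI)
      fix l x assume l: "l \<in> {1..L}" and x: "x \<in> A l"
      show "0 < pstar x" using pstar_eq[OF l x] cpos[OF l] by simp
      show "gam l \<le> sinr L A h sigma2 pstar l x"
        unfolding sinr_def K pstar_eq[OF l x] c_def using h_pos l S sigma_pos
        by (simp add: field_simps)
    next
      fix l assume "l \<in> {1..L}" thus "set_integrable lebesgue (A l) pstar" using si by blast
    qed
  qed
  have part1: "subproblem_feasible L A h gam sigma2 \<longleftrightarrow> S < 1"
    using S1 pstar_feas unfolding subproblem_feasible_def by blast
  have pareto: "pareto_efficient L A h gam sigma2 pstar" if S: "S < 1"
    unfolding pareto_efficient_def
  proof (intro conjI notI)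
    show "feasible_pd L A h gam sigma2 pstar" using pstar_feas S by blast
    assume "\<exists>q. feasible_pd L A h gam sigma2 q \<and> (\<forall>x\<in>mobiles L A. q x \<le> pstar x) \<and>
            emeasure lebesgue {x\<in>mobiles L A. q x < pstar x} > 0"
    then obtain q where f: "feasible_pd L A h gam sigma2 q" and
      lt: "emeasure lebesgue {x\<in>mobiles L A. q x < pstar x} > 0" by blast
    have "{x\<in>mobiles L A. q x < pstar x} = {}"
      using above[OF S f] pstar_eq unfolding mobiles_def by fastforce
    hence "emeasure lebesgue {x\<in>mobiles L A. q x < pstar x} = 0" by (simp only: emeasure_empty)
    thus False using lt by simp
  qed
  have uniq: "AE x in lebesgue. \<forall>l\<in>{1..L}. x \<in> A l \<longrightarrow> p x = c l"
    if S: "S < 1" and pe: "pareto_efficient L A h gam sigma2 p" for p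
  proof -
    have f: "feasible_pd L A h gam sigma2 p" using pe unfolding pareto_efficient_def by blast
    have ge: "\<forall>x\<in>mobiles L A. pstar x \<le> p x"
      using above[OF S f] pstar_eq unfolding mobiles_def by fastforce
    let ?E = "{x\<in>mobiles L A. pstar x < p x}"
    have E0: "emeasure lebesgue ?E = 0"
      using pe pstar_feas[OF S] ge unfolding pareto_efficient_def by (simp add: not_less) (meson not_le)
    have Eeq: "?E = (\<Union>l\<in>{1..L}. {x. c l < indicator (A l) x *\<^sub>R p x} \<inter> A l)"
      unfolding mobiles_def using pstar_eq by auto
    have "{x. c l < indicator (A l) x *\<^sub>R p x} \<inter> A l \<in> sets lebesgue" if l: "l \<in> {1..L}" for l
    proof -
      have "(\<lambda>x. indicator (A l) x *\<^sub>R p x) \<in> borel_measurable lebesgue"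
        using f l unfolding feasible_pd_def power_density_def set_integrable_def by blast
      hence "{x \<in> space lebesgue. c l < indicator (A l) x *\<^sub>R p x} \<in> sets lebesgue"
        by measurable
      thus ?thesis using A_meas l by auto
    qed
    hence "?E \<in> sets lebesgue" unfolding Eeq by blast
    hence "?E \<in> null_sets lebesgue" using E0 by (simp add: null_sets_def)
    thus ?thesis
    proof (rule AE_I')
      show "{x \<in> space lebesgue. \<not> (\<forall>l\<in>{1..L}. x \<in> A l \<longrightarrow> p x = c l)} \<subseteq> ?E"
        using ge pstar_eq unfolding mobiles_def by force
    qed
  qed
  show ?thesis
    unfolding S_def[symmetric] Let_def unfolding pstar_def[symmetric] unfolding c_def[symmetric]
    using part1 pareto uniq by blast
qed

end
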